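(* Let $P$ be a partially ordered set, $\mathcal J=(p_0\le\dots\le p_n)$ a d-flag in $P$ and $0\le k\le n$. The horn inclusion $i_k:\Lambda^{\mathcal J}_k\hookrightarrow\Delta^{\mathcal J}$ is admissible (i.e. $p_k=p_{k-1}$ or $p_k=p_{k+1}$) if and only if its realization $|i_k|_P:|\Lambda^{\mathcal J}_k|_P\to|\Delta^{\mathcal J}|_P$ is a stratum preserving homotopy equivalence.
   Context: $P$ carries the Alexandroff topology (closed sets = down-sets). A d-flag is a finite sequence $\mathcal J=(p_0\le\dots\le p_n)$ in $P$ with repetitions allowed. $\Delta^{\mathcal J}$ is the simplicial set $\Delta^n$ with the filtration $i\mapsto p_i$ of its vertices, and $\Lambda^{\mathcal J}_k\subset\Delta^{\mathcal J}$ is the horn $\Lambda^n_k$ with the induced filtration. For a $P$-filtered simplicial set $X$, $|X|_P$ is the geometric realization $|X|$ together with the continuous map to $P$ sending the open cell of a nondegenerate simplex to the maximal filtration value of its vertices (for $|\Delta^{\mathcal J}|$: a point with barycentric coordinates $(t_i)$ goes to $\max\{p_i:t_i>0\}$). A stratum preserving map commutes with the maps to $P$; a stratum preserving homotopy is a homotopy $Z\times[0,1]\to W$ that is stratum preserving when the source is filtered via $Z$; a stratum preserving homotopy equivalence is a stratum preserving map with a stratum preserving homotopy inverse up to such homotopies. *)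

theory Defs
  imports "HOL-Analysis.Analysis" "HOL-Homology.Simplices"
begin

definition dflag :: "nat \<Rightarrow> (nat \<Rightarrow> 'p::order) \<Rightarrow> bool" where
  "dflag n p \<longleftrightarrow> (\<forall>i j. i \<le> j \<longrightarrow> j \<le> n \<longrightarrow> p i \<le> p j)"

definition simplex_top :: "nat \<Rightarrow> (nat \<Rightarrow> real) topology" where
  "simplex_top n = subtopology (powertop_real UNIV) (standard_simplex n)"

definition horn_set :: "nat \<Rightarrow> nat \<Rightarrow> (nat \<Rightarrow> real) set" where
  "horn_set n k = {x \<in> standard_simplex n. \<exists>j\<le>n. j \<noteq> k \<and> x j = 0}"

definition horn_top :: "nat \<Rightarrow> nat \<Rightarrow> (nat \<Rightarrow> real) topology" where
  "horn_top n k = subtopology (powertop_real UNIV) (horn_set n k)"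

definition strat :: "nat \<Rightarrow> (nat \<Rightarrow> 'p::order) \<Rightarrow> (nat \<Rightarrow> real) \<Rightarrow> 'p" where
  "strat n p t = Greatest (\<lambda>q. \<exists>i\<le>n. 0 < t i \<and> q = p i)"

definition sp_map :: "'a topology \<Rightarrow> 'b topology \<Rightarrow> ('a \<Rightarrow> 'p) \<Rightarrow> ('b \<Rightarrow> 'p) \<Rightarrow> ('a \<Rightarrow> 'b) \<Rightarrow> bool" where
  "sp_map X Y sX sY f \<longleftrightarrow> continuous_map X Y f \<and> (\<forall>x\<in>topspace X. sY (f x) = sX x)"

definition sp_homotopic :: "'a topology \<Rightarrow> 'b topology \<Rightarrow> ('a \<Rightarrow> 'p) \<Rightarrow> ('b \<Rightarrow> 'p) \<Rightarrow> ('a \<Rightarrow> 'b) \<Rightarrow> ('a \<Rightarrow> 'b) \<Rightarrow> bool" where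
  "sp_homotopic X Y sX sY f g \<longleftrightarrow>
     homotopic_with (\<lambda>h. \<forall>x\<in>topspace X. sY (h x) = sX x) X Y f g"

definition sp_homotopy_equivalence ::
  "'a topology \<Rightarrow> 'b topology \<Rightarrow> ('a \<Rightarrow> 'p) \<Rightarrow> ('b \<Rightarrow> 'p) \<Rightarrow> ('a \<Rightarrow> 'b) \<Rightarrow> bool" where
  "sp_homotopy_equivalence X Y sX sY f \<longleftrightarrow>
     sp_map X Y sX sY f \<and>
     (\<exists>g. sp_map Y X sY sX g \<and> sp_homotopic X X sX sX (g \<circ> f) id \<and>
          sp_homotopic Y Y sY sY (f \<circ> g) id)"

definition admissible_horn :: "nat \<Rightarrow> (nat \<Rightarrow> 'p) \<Rightarrow> nat \<Rightarrow> bool" where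
  "admissible_horn n p k \<longleftrightarrow> (0 < k \<and> p k = p (k - 1)) \<or> (k < n \<and> p k = p (k + 1))"

end

theory Submission
  imports Defs "HOL-Homology.Homology"
begin


lemma simplex_pos: "t \<in> standard_simplex n \<Longrightarrow> \<exists>i\<le>n. 0 < t i"
proof (rule ccontr)
  assume t: "t \<in> standard_simplex n" and "\<not> (\<exists>i\<le>n. 0 < t i)"
  have "\<forall>i\<le>n. t i = 0"
  proof (intro allI impI)
    fix i assume i: "i \<le> n"
    have "0 \<le> t i" using t by (simp add: standard_simplex_def)
    moreover have "\<not> 0 < t i" using i \<open>\<not> (\<exists>i\<le>n. 0 < t i)\<close> by blast
    ultimately show "t i = 0" by simp
  qed
  then have "(\<Sum>i\<le>n. t i) = 0" by simp
  with t show False by (simp add: standard_simplex_def)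
qed

lemma strat_max:
  assumes "i \<le> n" "0 < t i" "\<And>j. j \<le> n \<Longrightarrow> 0 < t j \<Longrightarrow> p j \<le> p i"
  shows "strat n p t = p i"
  unfolding strat_def by (rule Greatest_equality) (use assms in auto)

lemma strat_Max:
  assumes "dflag n p" "\<exists>i\<le>n. 0 < t i"
  shows "strat n p t = p (Max {i. i \<le> n \<and> 0 < t i})"
proof -
  let ?S = "{i. i \<le> n \<and> 0 < t i}"
  have fin: "finite ?S" by simp
  have ne: "?S \<noteq> {}" using assms(2) by auto
  have m: "Max ?S \<in> ?S" using Max_in[OF fin ne] .
  show ?thesis
  proof (rule strat_max)
    show "Max ?S \<le> n" "0 < t (Max ?S)" using m by auto
    fix j assume "j \<le> n" "0 < t j"
    then have "j \<le> Max ?S" using fin by (intro Max_ge) auto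
    then show "p j \<le> p (Max ?S)" using assms(1) m unfolding dflag_def by auto
  qed
qed

lemma strat_cong:
  assumes d: "dflag n p" and ne: "\<exists>i\<le>n. 0 < t i" "\<exists>i\<le>n. 0 < t' i"
    and A: "\<And>i. i \<le> n \<Longrightarrow> 0 < t i \<Longrightarrow> \<exists>j\<le>n. 0 < t' j \<and> p i \<le> p j"
    and B: "\<And>i. i \<le> n \<Longrightarrow> 0 < t' i \<Longrightarrow> \<exists>j\<le>n. 0 < t j \<and> p i \<le> p j"
  shows "strat n p t = strat n p t'"
proof -
  let ?S = "{i. i \<le> n \<and> 0 < t i}" and ?S' = "{i. i \<le> n \<and> 0 < t' i}"
  have m: "Max ?S \<in> ?S" by (rule Max_in) (use ne in auto)
  have m': "Max ?S' \<in> ?S'" by (rule Max_in) (use ne in auto)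
  obtain j where j: "j \<le> n" "0 < t' j" "p (Max ?S) \<le> p j" using A m by blast
  have "j \<le> Max ?S'" using j by (intro Max_ge) auto
  moreover have "Max ?S' \<le> n" using m' by simp
  ultimately have "p j \<le> p (Max ?S')" using d unfolding dflag_def by blast
  note 1 = order.trans[OF j(3) this]
  obtain j' where j': "j' \<le> n" "0 < t j'" "p (Max ?S') \<le> p j'" using B m' by blast
  have "j' \<le> Max ?S" using j' by (intro Max_ge) auto
  moreover have "Max ?S \<le> n" using m by simp
  ultimately have "p j' \<le> p (Max ?S)" using d unfolding dflag_def by blast
  note 2 = order.trans[OF j'(3) this]
  show ?thesis using strat_Max[OF d ne(1)] strat_Max[OF d ne(2)] 1 2 by simp
qed

lemma topspace_simplex_top[simp]: "topspace (simplex_top n) = standard_simplex n"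
  by (simp add: simplex_top_def)

lemma topspace_horn_top[simp]: "topspace (horn_top n k) = horn_set n k"
  by (simp add: horn_top_def)

lemma horn_sub: "horn_set n k \<subseteq> standard_simplex n"
  by (auto simp: horn_set_def)



definition Hmv :: "nat \<Rightarrow> nat \<Rightarrow> real \<Rightarrow> (nat \<Rightarrow> real) \<Rightarrow> (nat \<Rightarrow> real)" where
  "Hmv k a s t = (\<lambda>i. if i = k then t k + (1-s) * t a else if i = a then s * t a else t i)"

lemma Hmv_alt: "a \<noteq> k \<Longrightarrow> Hmv k a s t i = t i + (if i = k then (1-s)*t a else 0) - (if i = a then (1-s)*t a else 0)"
  by (auto simp: Hmv_def algebra_simps)

lemma Hmv_1: "Hmv k a 1 t = t"
  by (auto simp: Hmv_def)

lemma Hmv_simplex: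
  assumes "a \<noteq> k" "a \<le> n" "k \<le> n" "t \<in> standard_simplex n" "0 \<le> s" "s \<le> 1"
  shows "Hmv k a s t \<in> standard_simplex n"
proof -
  have t: "\<And>i. 0 \<le> t i" "\<And>i. i > n \<Longrightarrow> t i = 0" "(\<Sum>i\<le>n. t i) = 1"
    using assms(4) by (auto simp: standard_simplex_def)
  have nn: "\<And>i. 0 \<le> Hmv k a s t i" using t(1) assms(5,6) by (auto simp: Hmv_def)
  have z: "\<And>i. i > n \<Longrightarrow> Hmv k a s t i = 0" using t(2) assms by (auto simp: Hmv_def)
  have "(\<Sum>i\<le>n. Hmv k a s t i) = (\<Sum>i\<le>n. t i) + (\<Sum>i\<le>n. (if i = k then (1-s)*t a else 0)) - (\<Sum>i\<le>n. (if i = a then (1-s)*t a else 0))"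
    by (simp add: Hmv_alt[OF assms(1)] sum.distrib sum_subtractf)
  also have "\<dots> = 1" using assms(2,3) t(3) by simp
  finally have s1: "(\<Sum>i\<le>n. Hmv k a s t i) = 1" .
  have le1: "Hmv k a s t i \<le> 1" for i
  proof (cases "i \<le> n")
    case True
    then have "Hmv k a s t i \<le> (\<Sum>j\<le>n. Hmv k a s t j)"
      by (intro member_le_sum) (auto simp: nn)
    then show ?thesis using s1 by simp
  qed (use z in auto)
  show ?thesis using nn z s1 le1 by (auto simp: standard_simplex_def)
qed

lemma Hmv_horn:
  assumes "a \<noteq> k" "a \<le> n" "k \<le> n" "t \<in> horn_set n k" "0 \<le> s" "s \<le> 1"
  shows "Hmv k a s t \<in> horn_set n k"
proof -
  obtain j where j: "j \<le> n" "j \<noteq> k" "t j = 0" using assms(4) by (auto simp: horn_set_def)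
  have "Hmv k a s t j = 0" using j by (auto simp: Hmv_def)
  then show ?thesis using j Hmv_simplex[OF assms(1-3) _ assms(5,6), of t] assms(4)
    by (auto simp: horn_set_def)
qed

lemma Hmv_0_horn:
  assumes "a \<noteq> k" "a \<le> n" "k \<le> n" "t \<in> standard_simplex n"
  shows "Hmv k a 0 t \<in> horn_set n k"
  using Hmv_simplex[OF assms(1-4), of 0] assms(1,2) by (auto simp: horn_set_def Hmv_def intro!: exI[of _ a])

lemma Hmv_strat:
  assumes d: "dflag n p" and "a \<noteq> k" "a \<le> n" "k \<le> n" "p a = p k" "t \<in> standard_simplex n" "0 \<le> s" "s \<le> 1"
  shows "strat n p (Hmv k a s t) = strat n p t"
proof (rule strat_cong[OF d])
  have t0: "\<And>i. 0 \<le> t i" using assms(6) by (auto simp: standard_simplex_def)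
  show "\<exists>i\<le>n. 0 < Hmv k a s t i"
    using simplex_pos[OF Hmv_simplex[OF assms(2,3,4,6,7,8)]] .
  show "\<exists>i\<le>n. 0 < t i" using simplex_pos[OF assms(6)] .
  show "\<exists>j\<le>n. 0 < t j \<and> p i \<le> p j" if "i \<le> n" "0 < Hmv k a s t i" for i
  proof -
    consider "i = k" | "i = a" | "i \<noteq> k" "i \<noteq> a" by blast
    then show ?thesis
    proof cases
      case 1
      then have "0 < t k \<or> 0 < t a" using that t0[of k] t0[of a] assms(7,8)
        by (auto simp: Hmv_def)
      then show ?thesis using assms(3-5) 1 by auto
    next
      case 2
      then have "0 < t a" using that assms(2,7,8) t0[of a] by (auto simp: Hmv_def zero_less_mult_iff)
      then show ?thesis using 2 assms(3) by auto
    qed (use that in \<open>auto simp: Hmv_def\<close>)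
  qed
  show "\<exists>j\<le>n. 0 < Hmv k a s t j \<and> p i \<le> p j" if "i \<le> n" "0 < t i" for i
  proof -
    consider "i = k" | "i = a" | "i \<noteq> k" "i \<noteq> a" by blast
    then show ?thesis
    proof cases
      case 1
      then have "0 < Hmv k a s t k" using that t0[of a] assms(7,8) by (auto simp: Hmv_def intro!: add_pos_nonneg mult_nonneg_nonneg)
      then show ?thesis using assms(4) 1 by auto
    next
      case 2
      show ?thesis
      proof (cases "s = 0")
        case True
        then have "0 < Hmv k a s t k" using that 2 t0[of k] by (auto simp: Hmv_def)
        then show ?thesis using assms(4,5) 2 by auto
      next
        case False
        then have "0 < Hmv k a s t a" using that 2 assms(2,7) by (auto simp: Hmv_def)
        then show ?thesis using 2 that by auto
      qed
    qed (use that in \<open>auto simp: Hmv_def\<close>)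
  qed
qed

lemma cont_snd_proj: "continuous_map (prod_topology X (subtopology (powertop_real UNIV) S)) euclideanreal (\<lambda>z. snd z i)"
proof -
  have 1: "continuous_map (subtopology (powertop_real UNIV) S) euclideanreal (\<lambda>x. x i)"
    by (rule continuous_map_from_subtopology) (use continuous_map_product_projection[of i UNIV "\<lambda>_. euclideanreal"] in simp)
  show ?thesis using continuous_map_compose[OF continuous_map_snd 1] by (simp add: o_def)
qed

lemma cont_fst01: "continuous_map (prod_topology (top_of_set {0..1::real}) X) euclideanreal fst"
proof -
  have 1: "continuous_map (top_of_set {0..1::real}) euclideanreal id" by (simp add: continuous_map_from_subtopology)
  show ?thesis using continuous_map_compose[OF continuous_map_fst 1] by simp
qed

lemma Hmv_cont:
  "continuous_map (prod_topology (top_of_set {0..1}) (subtopology (powertop_real UNIV) S)) (powertop_real UNIV)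
     (\<lambda>z. Hmv k a (fst z) (snd z))"
  unfolding continuous_map_componentwise_UNIV
proof
  fix i
  note c = cont_snd_proj[of "top_of_set {0..1::real}" S] and f = cont_fst01[of "subtopology (powertop_real UNIV) S"]
  show "continuous_map (prod_topology (top_of_set {0..1}) (subtopology (powertop_real UNIV) S)) euclideanreal (\<lambda>x. Hmv k a (fst x) (snd x) i)"
  proof (cases "i = k")
    case True
    then show ?thesis unfolding Hmv_def 
      by simp (intro continuous_map_add continuous_map_real_mult continuous_map_diff c f continuous_map_canonical_const)
  next
    case False
    then show ?thesis unfolding Hmv_def by (cases "i = a") (simp_all add: c, intro continuous_map_real_mult c f)
  qed
qed

lemma forward_dir:
  fixes p :: "nat \<Rightarrow> 'p::order"
  assumes d: "dflag n p" and kn: "k \<le> n" and adm: "admissible_horn n p k"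
  shows "sp_homotopy_equivalence (horn_top n k) (simplex_top n) (strat n p) (strat n p) id"
proof -
  obtain a where a: "a \<noteq> k" "a \<le> n" "p a = p k"
  proof -
    have "(0 < k \<and> p k = p (k - 1)) \<or> (k < n \<and> p k = p (k + 1))"
      using adm unfolding admissible_horn_def .
    then show ?thesis
    proof
      assume h: "0 < k \<and> p k = p (k - 1)"
      show ?thesis by (rule that[of "k - 1"]) (use h kn in auto)
    next
      assume h: "k < n \<and> p k = p (k + 1)"
      show ?thesis by (rule that[of "k + 1"]) (use h in auto)
    qed
  qed
  let ?h = "\<lambda>z. Hmv k a (fst z) (snd z)"
  have h01: "\<And>x. ?h (0, x) = (Hmv k a 0 \<circ> id) x" "\<And>x. ?h (1, x) = id x"
    by (auto simp: Hmv_1)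
  have cH: "continuous_map (prod_topology (top_of_set {0..1}) (horn_top n k)) (horn_top n k) ?h"
    unfolding horn_top_def continuous_map_in_subtopology
    using Hmv_cont[of "horn_set n k" k a] Hmv_horn[OF a(1,2) kn]
    by (auto simp: horn_top_def)
  have cS: "continuous_map (prod_topology (top_of_set {0..1}) (simplex_top n)) (simplex_top n) ?h"
    unfolding simplex_top_def continuous_map_in_subtopology
    using Hmv_cont[of "standard_simplex n" k a] Hmv_simplex[OF a(1,2) kn]
    by (auto simp: simplex_top_def)
  have m1: "sp_map (horn_top n k) (simplex_top n) (strat n p) (strat n p) id"
    unfolding sp_map_def horn_top_def simplex_top_def continuous_map_in_subtopology
    using horn_sub[of n k] by (auto intro: continuous_map_from_subtopology)
  have c0: "continuous_map (simplex_top n) (horn_top n k) (Hmv k a 0)"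
  proof -
    have "continuous_map (simplex_top n) (prod_topology (top_of_set {0..1::real}) (simplex_top n)) (\<lambda>x. (0, x))"
      by (intro continuous_intros) auto
    from continuous_map_compose[OF this Hmv_cont[of "standard_simplex n" k a, folded simplex_top_def]]
    have "continuous_map (simplex_top n) (powertop_real UNIV) (Hmv k a 0)" by (simp add: o_def)
    then show ?thesis unfolding horn_top_def continuous_map_in_subtopology
      using Hmv_0_horn[OF a(1,2) kn] by auto
  qed
  have m2: "sp_map (simplex_top n) (horn_top n k) (strat n p) (strat n p) (Hmv k a 0)"
    unfolding sp_map_def using c0 Hmv_strat[OF d a(1,2) kn a(3)] by auto
  have hh: "sp_homotopic (horn_top n k) (horn_top n k) (strat n p) (strat n p) (Hmv k a 0 \<circ> id) id"
    unfolding sp_homotopic_def homotopic_with_def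
    apply (rule exI[of _ ?h])
    using cH h01 Hmv_strat[OF d a(1,2) kn a(3)] horn_sub[of n k] by auto
  have hs: "sp_homotopic (simplex_top n) (simplex_top n) (strat n p) (strat n p) (id \<circ> Hmv k a 0) id"
    unfolding sp_homotopic_def homotopic_with_def
    apply (rule exI[of _ ?h])
    using cS h01 Hmv_strat[OF d a(1,2) kn a(3)] by auto
  show ?thesis unfolding sp_homotopy_equivalence_def using m1 m2 hh hs by blast
qed



definition sg :: "nat \<Rightarrow> nat \<Rightarrow> nat" where "sg k i = (if i < k then i else Suc i)"
definition sginv :: "nat \<Rightarrow> nat \<Rightarrow> nat" where "sginv k j = (if j < k then j else j - 1)"

lemma sginv_sg[simp]: "sginv k (sg k i) = i" by (auto simp: sg_def sginv_def)
lemma sg_sginv: "j \<noteq> k \<Longrightarrow> sg k (sginv k j) = j" by (auto simp: sg_def sginv_def)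
lemma sg_ne[simp]: "sg k i \<noteq> k" by (auto simp: sg_def)
lemma sg_le: "k \<le> n \<Longrightarrow> 1 \<le> n \<Longrightarrow> i \<le> n - 1 \<Longrightarrow> sg k i \<le> n" by (auto simp: sg_def)
lemma sginv_le: "j \<le> n \<Longrightarrow> j \<noteq> k \<Longrightarrow> k \<le> n \<Longrightarrow> sginv k j \<le> n - 1" by (auto simp: sginv_def)

lemma sum_reindex_sg:
  assumes "k \<le> n" "1 \<le> n"
  shows "(\<Sum>j\<in>{..n}-{k}. f j) = (\<Sum>i\<le>n-1. f (sg k i))"
proof -
  have inj: "inj_on (sg k) {..n-1}" by (metis inj_on_inverseI sginv_sg)
  have im: "sg k ` {..n-1} = {..n} - {k}"
  proof
    show "sg k ` {..n-1} \<subseteq> {..n} - {k}" using sg_le[OF assms] by auto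
    show "{..n} - {k} \<subseteq> sg k ` {..n-1}"
    proof
      fix j assume "j \<in> {..n} - {k}"
      then show "j \<in> sg k ` {..n-1}" using sg_sginv[of j k] sginv_le[of j n k] assms
        by (metis DiffE atMost_iff image_eqI insertI1)
    qed
  qed
  show ?thesis using sum.reindex[OF inj, of f] im by simp
qed

lemma sum_split_k:
  assumes "k \<le> n" "1 \<le> n"
  shows "(\<Sum>j\<le>n. f j) = f k + (\<Sum>i\<le>n-1. f (sg k i))"
proof -
  have "(\<Sum>j\<le>n. f j) = f k + (\<Sum>j\<in>{..n}-{k}. f j)"
    using assms by (simp add: sum.remove)
  then show ?thesis using sum_reindex_sg[OF assms, of f] by simp
qed

lemma continuous_map_Max_real:
  assumes "finite I" "I \<noteq> {}" "\<And>i. i \<in> I \<Longrightarrow> continuous_map X euclideanreal (f i)"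
  shows "continuous_map X euclideanreal (\<lambda>x. Max ((\<lambda>i. f i x) ` I))"
  using assms
proof (induction I rule: finite_ne_induct)
  case (singleton x)
  then show ?case by simp
next
  case (insert i F)
  have "(\<lambda>x. Max ((\<lambda>i. f i x) ` insert i F)) = (\<lambda>x. max (f i x) (Max ((\<lambda>i. f i x) ` F)))"
    using insert.hyps by (auto simp: Max_insert)
  then show ?case using insert by (auto intro!: continuous_map_real_max)
qed

definition wv :: "nat \<Rightarrow> (nat \<Rightarrow> real) \<Rightarrow> nat \<Rightarrow> real" where
  "wv m x i = (if i \<le> m then x i else - (\<Sum>l\<le>m. x l))"
definition Mx :: "nat \<Rightarrow> (nat \<Rightarrow> real) \<Rightarrow> real" where
  "Mx m x = Max ((\<lambda>i. - wv m x i) ` {..Suc m})"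
definition Amap :: "nat \<Rightarrow> nat \<Rightarrow> (nat \<Rightarrow> real) \<Rightarrow> nat \<Rightarrow> real" where
  "Amap n k x = (\<lambda>j. if j \<le> n \<and> j \<noteq> k then 1/real n + wv (n-2) x (sginv k j) / (real n * Mx (n-2) x) else 0)"

lemma sum_wv: "(\<Sum>i\<le>Suc m. wv m x i) = 0"
proof -
  have "(\<Sum>i\<le>m. wv m x i) = (\<Sum>i\<le>m. x i)" by (rule sum.cong) (auto simp: wv_def)
  then show ?thesis by (simp add: wv_def)
qed

lemma Mx_ge: "i \<le> Suc m \<Longrightarrow> - wv m x i \<le> Mx m x"
  unfolding Mx_def by (rule Max_ge) auto

lemma Mx_attained: "\<exists>i\<le>Suc m. - wv m x i = Mx m x"
proof -
  have "Mx m x \<in> (\<lambda>i. - wv m x i) ` {..Suc m}" unfolding Mx_def by (rule Max_in) auto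
  then show ?thesis by force
qed

lemma Mx_pos:
  assumes "x \<in> topspace (nsphere m)"
  shows "0 < Mx m x"
proof (rule ccontr)
  assume "\<not> 0 < Mx m x"
  then have nn: "\<forall>i\<in>{..Suc m}. 0 \<le> wv m x i" using Mx_ge[of _ m x] by force
  then have "\<forall>i\<in>{..Suc m}. wv m x i = 0" using sum_wv[of m x] sum_nonneg_eq_0_iff[of "{..Suc m}" "wv m x"] by simp
  then have "\<forall>i\<le>m. x i = 0" by (metis atMost_iff le_SucI wv_def)
  then have "(\<Sum>i\<le>m. x i ^ 2) = 0" by simp
  then show False using assms by (simp add: nsphere)
qed

lemma Amap_sg:
  assumes "2 \<le> n" "k \<le> n" "i \<le> n - 1"
  shows "Amap n k x (sg k i) = (Mx (n-2) x + wv (n-2) x i) / (real n * Mx (n-2) x) \<or> Mx (n-2) x = 0"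
  using sg_le[OF assms(2) _ assms(3)] assms(1)
  by (cases "Mx (n-2) x = 0") (auto simp: Amap_def field_simps)

lemma Amap_props:
  assumes n2: "2 \<le> n" and kn: "k \<le> n" and x: "x \<in> topspace (nsphere (n-2))"
  shows "Amap n k x \<in> standard_simplex n" "Amap n k x k = 0" "\<exists>j\<le>n. j \<noteq> k \<and> Amap n k x j = 0"
proof -
  define m where "m = n - 2"
  have nm: "n - 1 = Suc m" "real n = real m + 2" using n2 by (auto simp: m_def)
  have M: "0 < Mx m x" using Mx_pos x by (simp add: m_def)
  have As: "Amap n k x (sg k i) = (Mx m x + wv m x i) / (real n * Mx m x)" if "i \<le> Suc m" for i
  proof -
    have "i \<le> n - 1" using that nm by simp
    then show ?thesis using Amap_sg[OF n2 kn, of i x] M by (simp add: m_def)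
  qed
  have Anneg: "0 \<le> Amap n k x j" for j
  proof (cases "j \<le> n \<and> j \<noteq> k")
    case True
    then have j: "j = sg k (sginv k j)" "sginv k j \<le> Suc m" using sg_sginv sginv_le[of j n k] kn nm by auto
    have "0 \<le> Mx m x + wv m x (sginv k j)" using Mx_ge[OF j(2), of x] by simp
    then show ?thesis using As[OF j(2)] j(1) M by simp
  qed (auto simp: Amap_def)
  show Ak: "Amap n k x k = 0" by (simp add: Amap_def)
  have "(\<Sum>j\<le>n. Amap n k x j) = Amap n k x k + (\<Sum>i\<le>n-1. Amap n k x (sg k i))"
    using sum_split_k[OF kn] n2 by simp
  also have "\<dots> = (\<Sum>i\<le>Suc m. (Mx m x + wv m x i) / (real n * Mx m x))"
    using Ak As nm by simp
  also have "\<dots> = ((\<Sum>i\<le>Suc m. Mx m x) + (\<Sum>i\<le>Suc m. wv m x i)) / (real n * Mx m x)"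
    by (simp only: sum.distrib[symmetric] sum_divide_distrib)
  also have "\<dots> = 1" using M nm sum_wv[of m x] by simp
  finally have s1: "(\<Sum>j\<le>n. Amap n k x j) = 1" .
  have z: "\<And>j. j > n \<Longrightarrow> Amap n k x j = 0" by (simp add: Amap_def)
  have le1: "Amap n k x j \<le> 1" for j
  proof (cases "j \<le> n")
    case True
    then have "Amap n k x j \<le> (\<Sum>j\<le>n. Amap n k x j)"
      by (intro member_le_sum) (auto simp: Anneg)
    then show ?thesis using s1 by simp
  qed (use z in auto)
  show "Amap n k x \<in> standard_simplex n" using Anneg z s1 le1 by (auto simp: standard_simplex_def)
  obtain i where i: "i \<le> Suc m" "- wv m x i = Mx m x" using Mx_attained by blast
  have "Amap n k x (sg k i) = 0" using As[OF i(1)] i(2) by simp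
  then show "\<exists>j\<le>n. j \<noteq> k \<and> Amap n k x j = 0" using sg_le[OF kn, of i] i(1) nm n2 by (intro exI[of _ "sg k i"]) auto
qed

definition Vv :: "nat \<Rightarrow> nat \<Rightarrow> (nat \<Rightarrow> real) \<Rightarrow> nat \<Rightarrow> real" where
  "Vv n k t i = t (sg k i) - (1 - t k) / real n"
definition Nn :: "nat \<Rightarrow> nat \<Rightarrow> (nat \<Rightarrow> real) \<Rightarrow> real" where
  "Nn n k t = sqrt (\<Sum>i\<le>n-2. (Vv n k t i)^2)"
definition Bmap :: "nat \<Rightarrow> nat \<Rightarrow> (nat \<Rightarrow> real) \<Rightarrow> nat \<Rightarrow> real" where
  "Bmap n k t = (\<lambda>i. if i \<le> n-2 then Vv n k t i / Nn n k t else 0)"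

lemma Nn_pos:
  assumes n2: "2 \<le> n" and kn: "k \<le> n" and t: "t \<in> standard_simplex n" and tk: "t k \<noteq> 1"
    and j: "j \<le> n" "j \<noteq> k" "t j = 0"
  shows "0 < Nn n k t"
proof -
  define m where "m = n - 2"
  have nm: "n - 1 = Suc m" "real n = real m + 2" using n2 by (auto simp: m_def)
  have tk1: "t k < 1" using t tk by (auto simp: standard_simplex_def less_le)
  have "1 = t k + (\<Sum>i\<le>n-1. t (sg k i))"
    using sum_split_k[OF kn, of t] n2 t by (simp add: standard_simplex_def)
  then have st: "(\<Sum>i\<le>Suc m. t (sg k i)) = 1 - t k" using nm by simp
  have "(\<Sum>i\<le>Suc m. Vv n k t i) = (\<Sum>i\<le>Suc m. t (sg k i)) - (\<Sum>i\<le>Suc m. (1 - t k) / real n)"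
    by (simp add: Vv_def sum_subtractf)
  also have "\<dots> = 0"
  proof -
    have "real (Suc (Suc m)) = real n" using nm by simp
    then have "(\<Sum>i\<le>Suc m. (1 - t k) / real n) = 1 - t k" using n2 by simp
    then show ?thesis using st by simp
  qed
  finally have sV: "(\<Sum>i\<le>Suc m. Vv n k t i) = 0" .
  have ij: "sginv k j \<le> Suc m" "sg k (sginv k j) = j" using sginv_le[OF j(1,2) kn] sg_sginv[OF j(2)] nm by auto
  have Vj: "Vv n k t (sginv k j) < 0" using ij(2) j(3) tk1 n2 by (simp add: Vv_def)
  show ?thesis
  proof (rule ccontr)
    assume "\<not> 0 < Nn n k t"
    moreover have "0 \<le> (\<Sum>i\<le>m. (Vv n k t i)^2)" by (simp add: sum_nonneg)
    ultimately have "(\<Sum>i\<le>m. (Vv n k t i)^2) = 0" by (simp add: Nn_def m_def)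
    then have z: "\<forall>i\<le>m. Vv n k t i = 0" using sum_nonneg_eq_0_iff[of "{..m}" "\<lambda>i. (Vv n k t i)^2"] by simp
    then have "(\<Sum>i\<le>m. Vv n k t i) = 0" by simp
    then have "Vv n k t (Suc m) = 0" using sV by simp
    then have "\<forall>i\<le>Suc m. Vv n k t i = 0" using z le_Suc_eq by auto
    then show False using Vj ij(1) by auto
  qed
qed

lemma Bmap_in:
  assumes "0 < Nn n k t"
  shows "Bmap n k t \<in> topspace (nsphere (n-2))"
proof -
  have "(\<Sum>i\<le>n-2. (Bmap n k t i)^2) = (\<Sum>i\<le>n-2. (Vv n k t i)^2) / (Nn n k t)^2"
    by (simp add: Bmap_def power_divide sum_divide_distrib)
  also have "\<dots> = 1" using assms unfolding Nn_def
    by (simp add: sum_nonneg)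
  finally show ?thesis by (simp add: nsphere Bmap_def)
qed

lemma BA:
  assumes n2: "2 \<le> n" and kn: "k \<le> n" and x: "x \<in> topspace (nsphere (n-2))"
  shows "Bmap n k (Amap n k x) = x"
proof -
  define m where "m = n - 2"
  have nm: "n - 1 = Suc m" "real n = real m + 2" using n2 by (auto simp: m_def)
  have M: "0 < Mx m x" using Mx_pos x by (simp add: m_def)
  have xs: "(\<Sum>i\<le>m. x i ^ 2) = 1" "\<And>i. i > m \<Longrightarrow> x i = 0" using x by (auto simp: nsphere m_def)
  have Ak: "Amap n k x k = 0" by (simp add: Amap_def)
  have V: "Vv n k (Amap n k x) i = x i / (real n * Mx m x)" if "i \<le> m" for i
  proof -
    have "sg k i \<le> n" using sg_le[OF kn, of i] that nm by simp
    then have "Amap n k x (sg k i) = 1 / real n + x i / (real n * Mx m x)"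
      using that by (simp add: Amap_def wv_def m_def)
    then show ?thesis using Ak by (simp add: Vv_def)
  qed
  have N: "Nn n k (Amap n k x) = 1 / (real n * Mx m x)"
  proof -
    have "(\<Sum>i\<le>m. (Vv n k (Amap n k x) i)^2) = (\<Sum>i\<le>m. x i ^ 2) / (real n * Mx m x)^2"
      by (simp add: V power_divide sum_divide_distrib)
    also have "\<dots> = (1 / (real n * Mx m x))^2" using xs by (simp add: power_divide)
    finally show ?thesis unfolding Nn_def m_def[symmetric] using M n2 by simp
  qed
  show ?thesis
  proof
    fix i show "Bmap n k (Amap n k x) i = x i"
      using V N M n2 xs(2)[of i] by (cases "i \<le> m") (auto simp: Bmap_def m_def[symmetric])
  qed
qed

lemma cont_proj_sub: "continuous_map (subtopology (powertop_real UNIV) S) euclideanreal (\<lambda>x. x i)"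
  by (rule continuous_map_from_subtopology) (use continuous_map_product_projection[of i UNIV "\<lambda>_. euclideanreal"] in simp)

lemma cont_wv: "continuous_map (nsphere m) euclideanreal (\<lambda>x. wv m x i)"
  unfolding wv_def
  by (cases "i \<le> m") (auto intro!: continuous_intros continuous_map_nsphere_projection)

lemma cont_Mx: "continuous_map (nsphere m) euclideanreal (Mx m)"
  unfolding Mx_def
  by (rule continuous_map_Max_real) (auto intro!: continuous_intros cont_wv)

lemma cont_Amap:
  assumes "2 \<le> n"
  shows "continuous_map (nsphere (n-2)) (powertop_real UNIV) (Amap n k)"
  unfolding continuous_map_componentwise_UNIV
proof
  fix j
  show "continuous_map (nsphere (n-2)) euclideanreal (\<lambda>x. Amap n k x j)"
  proof (cases "j \<le> n \<and> j \<noteq> k")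
    case jc: True
    have "continuous_map (nsphere (n-2)) euclideanreal (\<lambda>x. 1/real n + wv (n-2) x (sginv k j) / (real n * Mx (n-2) x))"
      using assms by (intro continuous_intros cont_wv cont_Mx) (auto dest: Mx_pos)
    moreover have "\<And>x. Amap n k x j = 1/real n + wv (n-2) x (sginv k j) / (real n * Mx (n-2) x)"
      using jc by (simp add: Amap_def)
    ultimately show ?thesis by simp
  next
    case False
    then have "\<And>x. Amap n k x j = 0" by (auto simp: Amap_def)
    then show ?thesis by simp
  qed
qed

lemma cont_Bmap:
  assumes "\<And>t. t \<in> S \<Longrightarrow> 0 < Nn n k t" and n2: "2 \<le> n"
  shows "continuous_map (subtopology (powertop_real UNIV) S) (nsphere (n-2)) (Bmap n k)"
proof -
  have c: "continuous_map (subtopology (powertop_real UNIV) S) euclideanreal (\<lambda>t. Bmap n k t i)" for i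
  proof (cases "i \<le> n-2")
    case True
    have "continuous_map (subtopology (powertop_real UNIV) S) euclideanreal (\<lambda>t. Vv n k t i / Nn n k t)"
      unfolding Vv_def Nn_def
      apply (intro continuous_intros cont_proj_sub)
      using n2 assms(1) apply (auto simp: Nn_def Vv_def)
      by (metis order_less_irrefl)
    then show ?thesis using True by (simp add: Bmap_def)
  qed (simp add: Bmap_def)
  show ?thesis
    unfolding nsphere continuous_map_in_subtopology
    using c Bmap_in[of n k] assms
    by (auto simp: continuous_map_componentwise_UNIV nsphere)
qed



definition ev :: "nat \<Rightarrow> nat \<Rightarrow> real" where "ev z = (\<lambda>i. if i = z then 1 else 0)"
definition Gc :: "nat \<Rightarrow> real \<Rightarrow> (nat \<Rightarrow> real) \<Rightarrow> nat \<Rightarrow> real" where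
  "Gc z s t = (\<lambda>i. (1 - s) * t i + s * ev z i)"

lemma ev_simplex: "z \<le> n \<Longrightarrow> ev z \<in> standard_simplex n"
  by (auto simp: standard_simplex_def ev_def)

lemma Gc_0[simp]: "Gc z 0 t = t" by (simp add: Gc_def)
lemma Gc_1[simp]: "Gc z 1 t = ev z" by (simp add: Gc_def)

lemma Gc_simplex:
  assumes "z \<le> n" "t \<in> standard_simplex n" "0 \<le> s" "s \<le> 1"
  shows "Gc z s t \<in> standard_simplex n"
proof -
  have t: "\<And>i. 0 \<le> t i" "\<And>i. t i \<le> 1" "\<And>i. i > n \<Longrightarrow> t i = 0" "(\<Sum>i\<le>n. t i) = 1"
    using assms(2) by (auto simp: standard_simplex_def)
  have nn: "0 \<le> Gc z s t i" for i using t(1)[of i] assms(3,4) by (auto simp: Gc_def ev_def)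
  have le: "Gc z s t i \<le> 1" for i
  proof -
    have "(1 - s) * t i \<le> (1 - s) * 1" using t(2)[of i] assms(4) by (intro mult_left_mono) auto
    then show ?thesis using assms(3,4) by (auto simp: Gc_def ev_def)
  qed
  have z: "Gc z s t i = 0" if "i > n" for i using t(3)[OF that] that assms(1) by (auto simp: Gc_def ev_def)
  have "(\<Sum>i\<le>n. Gc z s t i) = (1 - s) * (\<Sum>i\<le>n. t i) + s * (\<Sum>i\<le>n. ev z i)"
    by (simp add: Gc_def sum.distrib sum_distrib_left)
  also have "\<dots> = 1" using t(4) assms(1) by (simp add: ev_def)
  finally show ?thesis using nn le z by (auto simp: standard_simplex_def)
qed

lemma Gc_cont:
  "continuous_map (prod_topology (top_of_set {0..1}) (subtopology (powertop_real UNIV) S)) (powertop_real UNIV)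
     (\<lambda>w. Gc z (fst w) (snd w))"
  unfolding continuous_map_componentwise_UNIV
proof
  fix i
  note c = cont_snd_proj[of "top_of_set {0..1::real}" S] and f = cont_fst01[of "subtopology (powertop_real UNIV) S"]
  show "continuous_map (prod_topology (top_of_set {0..1}) (subtopology (powertop_real UNIV) S)) euclideanreal (\<lambda>x. Gc z (fst x) (snd x) i)"
    unfolding Gc_def by (intro continuous_map_add continuous_map_real_mult continuous_map_diff c f continuous_map_canonical_const)
qed

lemma homotopic_with_True:
  "homotopic_with (\<lambda>x. True) X Y p q \<longleftrightarrow>
   (\<exists>h. continuous_map (prod_topology (top_of_set {0..1::real}) X) Y h \<and>
        (\<forall>x\<in>topspace X. h (0, x) = p x) \<and> (\<forall>x\<in>topspace X. h (1, x) = q x))"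
  by (subst homotopic_with) auto

lemma strat_ev: "z \<le> n \<Longrightarrow> strat n p (ev z) = p z"
  by (rule strat_max) (auto simp: ev_def split: if_splits)

lemma nonadm_uniq:
  fixes p :: "nat \<Rightarrow> 'p::order"
  assumes d: "dflag n p" and kn: "k \<le> n" and nadm: "\<not> admissible_horn n p k"
    and i: "i \<le> n" "i \<noteq> k"
  shows "p i \<noteq> p k"
proof
  assume eq: "p i = p k"
  show False
  proof (cases "i < k")
    case True
    then have "p i \<le> p (k-1)" "p (k-1) \<le> p k" using d kn unfolding dflag_def by auto
    then have "p (k-1) = p k" using eq by (metis order_antisym)
    then show False using nadm True unfolding admissible_horn_def by auto
  next
    case False
    then have ik: "k < i" using i by auto
    then have "p k \<le> p (k+1)" "p (k+1) \<le> p i" using d i unfolding dflag_def by auto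
    then have "p k = p (k+1)" using eq by (metis order_antisym)
    then show False using nadm ik i unfolding admissible_horn_def by auto
  qed
qed

lemma strat_k_zero:
  fixes p :: "nat \<Rightarrow> 'p::order"
  assumes d: "dflag n p" and kn: "k \<le> n" and nadm: "\<not> admissible_horn n p k"
    and t: "t \<in> standard_simplex n" "t k = 0"
  shows "strat n p t \<noteq> p k"
proof -
  let ?S = "{i. i \<le> n \<and> 0 < t i}"
  have ne: "\<exists>i\<le>n. 0 < t i" using simplex_pos[OF t(1)] .
  have m: "Max ?S \<in> ?S" by (rule Max_in) (use ne in auto)
  then have "Max ?S \<noteq> k" using t(2) by auto
  then have "p (Max ?S) \<noteq> p k" using nonadm_uniq[OF d kn nadm] m by auto
  then show ?thesis using strat_Max[OF d ne] by simp
qed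

lemma strat_k_one:
  assumes kn: "k \<le> n" and t: "t \<in> standard_simplex n" "t k = 1"
  shows "strat n p t = p k"
proof (rule strat_max)
  have t0: "\<And>i. 0 \<le> t i" using t(1) by (auto simp: standard_simplex_def)
  have "(\<Sum>i\<le>n. t i) = t k + (\<Sum>i\<in>{..n}-{k}. t i)" using kn by (simp add: sum.remove)
  then have "(\<Sum>i\<in>{..n}-{k}. t i) = 0" using t by (simp add: standard_simplex_def)
  then have z: "\<forall>i\<in>{..n}-{k}. t i = 0" using sum_nonneg_eq_0_iff[of "{..n}-{k}" t] t0 by simp
  show "k \<le> n" "0 < t k" using kn t by auto
  fix j assume "j \<le> n" "0 < t j"
  then have "j = k" using z by force
  then show "p j \<le> p k" by simp
qed

lemma backward_dir:
  fixes p :: "nat \<Rightarrow> 'p::order"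
  assumes d: "dflag n p" and kn: "k \<le> n" and nadm: "\<not> admissible_horn n p k"
    and he: "sp_homotopy_equivalence (horn_top n k) (simplex_top n) (strat n p) (strat n p) id"
  shows False
proof -
  obtain g where gc: "continuous_map (simplex_top n) (horn_top n k) g"
    and gs: "\<And>x. x \<in> standard_simplex n \<Longrightarrow> strat n p (g x) = strat n p x"
    and hg: "homotopic_with (\<lambda>h. \<forall>x\<in>horn_set n k. strat n p (h x) = strat n p x) (horn_top n k) (horn_top n k) (g \<circ> id) id"
    using he unfolding sp_homotopy_equivalence_def sp_map_def sp_homotopic_def by auto
  have gh: "g x \<in> horn_set n k" if "x \<in> standard_simplex n" for x
    using gc that unfolding continuous_map_def by auto
  consider "n = 0" | "n = 1" | "2 \<le> n" by linarith
  then show False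
  proof cases
    case 1
    have "g (ev 0) \<in> horn_set n k" using gh ev_simplex[of 0 n] by simp
    then show False using 1 kn by (auto simp: horn_set_def)
  next
    case 2
    define z where "z = 1 - k"
    have zn: "z \<le> n" "z \<noteq> k" using 2 kn unfolding z_def by arith+
    have y: "g (ev z) \<in> horn_set n k" using gh ev_simplex[OF zn(1)] by simp
    then obtain j where j: "j \<le> 1" "j \<noteq> k" "g (ev z) j = 0" using 2 by (auto simp: horn_set_def)
    have ys: "g (ev z) \<in> standard_simplex 1" using y 2 by (auto simp: horn_set_def)
    then have "g (ev z) 0 + g (ev z) 1 = 1" by (simp add: standard_simplex_def)
    moreover have "k = 0 \<or> k = 1" "j = 0 \<or> j = 1" using kn j(1) 2 by auto
    ultimately have "g (ev z) k = 1" using j(2,3) by auto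
    then have "strat n p (g (ev z)) = p k" using strat_k_one[OF kn] ys 2 by simp
    moreover have "strat n p (g (ev z)) = p z" using gs[OF ev_simplex[OF zn(1)]] strat_ev[OF zn(1)] by simp
    ultimately show False using nonadm_uniq[OF d kn nadm zn] by simp
  next
    case 3
    obtain h where hc: "continuous_map (prod_topology (top_of_set {0..1::real}) (horn_top n k)) (horn_top n k) h"
      and h0: "\<And>x. h (0, x) = g x" and h1: "\<And>x. h (1, x) = x"
      and hs: "\<And>t x. t \<in> {0..1} \<Longrightarrow> x \<in> horn_set n k \<Longrightarrow> strat n p (h (t, x)) = strat n p x"
      using hg unfolding homotopic_with_def by auto
    define Ys where "Ys = {y \<in> horn_set n k. strat n p y \<noteq> p k}"
    let ?S = "nsphere (n-2)"
    let ?I = "top_of_set {0..1::real}"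
    have NnY: "0 < Nn n k y" if "y \<in> Ys" for y
    proof -
      have y: "y \<in> standard_simplex n" "strat n p y \<noteq> p k" "\<exists>j\<le>n. j \<noteq> k \<and> y j = 0"
        using that by (auto simp: Ys_def horn_set_def)
      have "y k \<noteq> 1" using strat_k_one[OF kn y(1)] y(2) by auto
      then show ?thesis using Nn_pos[OF 3 kn y(1)] y(3) by blast
    qed
    have cB: "continuous_map (subtopology (powertop_real UNIV) Ys) ?S (Bmap n k)"
      by (rule cont_Bmap[OF NnY 3])
    have AY: "Amap n k x \<in> Ys" if "x \<in> topspace ?S" for x
      using Amap_props[OF 3 kn that] strat_k_zero[OF d kn nadm]
      by (auto simp: Ys_def horn_set_def)
    have cA: "continuous_map ?S (horn_top n k) (Amap n k)"
      unfolding horn_top_def continuous_map_in_subtopology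
      using cont_Amap[OF 3] AY by (auto simp: Ys_def)
    define z where "z = (if k < n then n else 0)"
    have zn: "z \<le> n" by (simp add: z_def)
    have Gs: "strat n p (Gc z s t) \<noteq> p k" if t: "t \<in> standard_simplex n" "strat n p t \<noteq> p k" and s: "0 \<le> s" "s \<le> 1" for s t
    proof (cases "s = 0")
      case True
      then show ?thesis using t by simp
    next
      case False
      show ?thesis
      proof (cases "k < n")
        case True
        then have zz: "z = n" by (simp add: z_def)
        have "0 < Gc z s t n" using t(1) s False zz
          by (auto simp: Gc_def ev_def standard_simplex_def intro!: add_nonneg_pos)
        then have "strat n p (Gc z s t) = p n"
          using d by (intro strat_max) (auto simp: dflag_def)
        then show ?thesis using nonadm_uniq[OF d kn nadm, of n] True by auto
      next
        case False
        then have kk: "k = n" "z = 0" using kn by (auto simp: z_def)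
        have "t n = 0"
        proof (rule ccontr)
          assume "t n \<noteq> 0"
          then have "0 < t n" using t(1) by (auto simp: standard_simplex_def less_le)
          then have "strat n p t = p n" using d by (intro strat_max) (auto simp: dflag_def)
          then show False using t(2) kk by simp
        qed
        then have "Gc z s t k = 0" using kk 3 by (simp add: Gc_def ev_def)
        then show ?thesis using strat_k_zero[OF d kn nadm Gc_simplex[OF zn t(1) s]] by simp
      qed
    qed
    have c1: "continuous_map (prod_topology ?I ?S) (prod_topology ?I (horn_top n k)) (\<lambda>w. (fst w, Amap n k (snd w)))"
      by (intro continuous_map_pairedI continuous_map_fst continuous_map_compose[OF continuous_map_snd cA, unfolded o_def])
    have c1': "continuous_map (prod_topology ?I ?S) (subtopology (powertop_real UNIV) Ys) (\<lambda>w. h (fst w, Amap n k (snd w)))"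
      unfolding continuous_map_in_subtopology
    proof
      show "continuous_map (prod_topology ?I ?S) (powertop_real UNIV) (\<lambda>w. h (fst w, Amap n k (snd w)))"
        using continuous_map_compose[OF c1 hc] unfolding horn_top_def o_def
        by (rule continuous_map_into_fulltopology)
      show "(\<lambda>w. h (fst w, Amap n k (snd w))) \<in> topspace (prod_topology ?I ?S) \<rightarrow> Ys"
      proof
        fix w assume w: "w \<in> topspace (prod_topology ?I ?S)"
        then have w': "fst w \<in> {0..1}" "Amap n k (snd w) \<in> Ys" using AY by auto
        have "h (fst w, Amap n k (snd w)) \<in> horn_set n k"
          using continuous_map_image_subset_topspace[OF hc] w' by (auto simp: Ys_def)
        then show "h (fst w, Amap n k (snd w)) \<in> Ys"
          using hs[of "fst w" "Amap n k (snd w)"] w' by (auto simp: Ys_def)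
      qed
    qed
    have H1: "homotopic_with (\<lambda>x. True) ?S ?S (\<lambda>x. Bmap n k (g (Amap n k x))) id"
      unfolding homotopic_with_True
      apply (rule exI[of _ "\<lambda>w. Bmap n k (h (fst w, Amap n k (snd w)))"])
      using continuous_map_compose[OF c1' cB] BA[OF 3 kn] by (auto simp: o_def h0 h1)
    have AS: "Amap n k x \<in> standard_simplex n" if "x \<in> topspace ?S" for x
      using AY[OF that] by (auto simp: Ys_def horn_set_def)
    have c2: "continuous_map (prod_topology ?I ?S) (prod_topology ?I (subtopology (powertop_real UNIV) (standard_simplex n))) (\<lambda>w. (fst w, Amap n k (snd w)))"
      using cA unfolding horn_top_def
      by (intro continuous_map_pairedI continuous_map_fst continuous_map_compose[OF continuous_map_snd, unfolded o_def])
         (auto simp: continuous_map_in_subtopology AS)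
    have c2a: "continuous_map (prod_topology ?I ?S) (simplex_top n) (\<lambda>w. Gc z (fst w) (Amap n k (snd w)))"
      unfolding simplex_top_def continuous_map_in_subtopology
    proof
      show "continuous_map (prod_topology ?I ?S) (powertop_real UNIV) (\<lambda>w. Gc z (fst w) (Amap n k (snd w)))"
        using continuous_map_compose[OF c2 Gc_cont[of "standard_simplex n" z]] by (simp add: o_def)
      show "(\<lambda>w. Gc z (fst w) (Amap n k (snd w))) \<in> topspace (prod_topology ?I ?S) \<rightarrow> standard_simplex n"
        using Gc_simplex[OF zn AS] by auto
    qed
    have c2': "continuous_map (prod_topology ?I ?S) (subtopology (powertop_real UNIV) Ys) (\<lambda>w. g (Gc z (fst w) (Amap n k (snd w))))"
      unfolding continuous_map_in_subtopology
    proof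
      show "continuous_map (prod_topology ?I ?S) (powertop_real UNIV) (\<lambda>w. g (Gc z (fst w) (Amap n k (snd w))))"
        using continuous_map_compose[OF c2a gc] unfolding horn_top_def o_def
        by (rule continuous_map_into_fulltopology)
      show "(\<lambda>w. g (Gc z (fst w) (Amap n k (snd w)))) \<in> topspace (prod_topology ?I ?S) \<rightarrow> Ys"
      proof
        fix w assume w: "w \<in> topspace (prod_topology ?I ?S)"
        then have w': "fst w \<in> {0..1}" "snd w \<in> topspace ?S" by auto
        have G: "Gc z (fst w) (Amap n k (snd w)) \<in> standard_simplex n"
          using Gc_simplex[OF zn AS[OF w'(2)]] w'(1) by auto
        have "strat n p (Gc z (fst w) (Amap n k (snd w))) \<noteq> p k"
          using Gs[OF AS[OF w'(2)]] AY[OF w'(2)] w'(1) by (auto simp: Ys_def)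
        then show "g (Gc z (fst w) (Amap n k (snd w))) \<in> Ys"
          using gh[OF G] gs[OF G] by (auto simp: Ys_def)
      qed
    qed
    have H2: "homotopic_with (\<lambda>x. True) ?S ?S (\<lambda>x. Bmap n k (g (Amap n k x))) (\<lambda>x. Bmap n k (g (ev z)))"
      unfolding homotopic_with_True
      apply (rule exI[of _ "\<lambda>w. Bmap n k (g (Gc z (fst w) (Amap n k (snd w))))"])
      using continuous_map_compose[OF c2' cB] by (auto simp: o_def)
    have "homotopic_with (\<lambda>x. True) ?S ?S id (\<lambda>x. Bmap n k (g (ev z)))"
      using homotopic_with_trans[OF homotopic_with_symD[OF H1] H2] .
    then have "contractible_space ?S" unfolding contractible_space_def by blast
    then show False using non_contractible_space_nsphere by blast
  qed
qed


theorem lemma1p2p10: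
  fixes p :: "nat \<Rightarrow> 'p::order" and n k :: nat
  assumes "dflag n p" and "k \<le> n"
  shows "admissible_horn n p k \<longleftrightarrow>
    sp_homotopy_equivalence (horn_top n k) (simplex_top n) (strat n p) (strat n p) id"
  using forward_dir[OF assms] backward_dir[OF assms] by blast

end
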